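(* Let $A:\mathbb{R}^n\rightrightarrows\mathbb{R}^n$ be a maximally monotone operator, let $x^*$ satisfy $0\in A(x^* )$, and let $\tilde A=I-J_A$ where $J_A=(I+A)^{-1}$. Assume $\tilde A$ is differentiable. Let $X:[0,\infty)\to\mathbb{R}^n$ be a solution of $$\dot X(t)=J_A(X(t))-X(t)=-\tilde A(X(t)),\qquad X(0)=x_0.$$ Then for every $t>0$, $$\|\dot X(t)\|^2=\|\tilde A(X(t))\|^2\leqslant\frac{\|x_0-x^*\|^2}{2t}.$$
   Context: $J_A=(I+A)^{-1}$ is the resolvent of $A$ (single-valued and defined on all of $\mathbb{R}^n$ since $A$ is maximally monotone); $\tilde A=I-J_A$ is the Yosida approximation of $A$. $\|\cdot\|$ is the Euclidean norm. *)

theory Defs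
  imports "HOL-Analysis.Analysis"
begin

definition monotone_op :: "('a::real_inner \<Rightarrow> 'a set) \<Rightarrow> bool" where
  "monotone_op A \<longleftrightarrow>
     (\<forall>x y u v. u \<in> A x \<longrightarrow> v \<in> A y \<longrightarrow> inner (x - y) (u - v) \<ge> 0)"

definition graph_op :: "('a \<Rightarrow> 'a set) \<Rightarrow> ('a \<times> 'a) set" where
  "graph_op A = {(x, u). u \<in> A x}"

definition maximal_monotone :: "('a::real_inner \<Rightarrow> 'a set) \<Rightarrow> bool" where
  "maximal_monotone A \<longleftrightarrow> monotone_op A \<and>
     (\<forall>B. monotone_op B \<and> graph_op A \<subseteq> graph_op B \<longrightarrow> graph_op B = graph_op A)"

text \<open>Resolvent J_A = (I + A)^{-1}: J_A x is the unique y with x \<in> y + A y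
  (single-valued and total for maximally monotone A).\<close>
definition resolvent :: "('a::real_inner \<Rightarrow> 'a set) \<Rightarrow> 'a \<Rightarrow> 'a" where
  "resolvent A x = (THE y. x - y \<in> A y)"

definition yosida :: "('a::real_inner \<Rightarrow> 'a set) \<Rightarrow> 'a \<Rightarrow> 'a" where
  "yosida A x = x - resolvent A x"

end

theory Submission
  imports Defs "HOL-Analysis.Analysis"
begin


lemma key_ineq:
  fixes F :: "('a::real_inner \<times> 'a) set" and mu :: "'a \<times> 'a \<Rightarrow> real"
  assumes fin: "finite F"
    and mon: "\<And>p q. p \<in> F \<Longrightarrow> q \<in> F \<Longrightarrow> inner (fst p - fst q) (snd p - snd q) \<ge> 0"
    and nn: "\<And>p. p \<in> F \<Longrightarrow> mu p \<ge> 0" and s1: "sum mu F = 1"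
    and y: "y = (\<Sum>p\<in>F. mu p *\<^sub>R fst p)"
  shows "(\<Sum>p\<in>F. mu p * inner (x - y - snd p) (y - fst p)) \<ge> 0"
proof -
  have e1: "y - fst p = (\<Sum>q\<in>F. mu q *\<^sub>R (fst q - fst p))" for p
    by (simp add: y scaleR_diff_right sum_subtractf flip: scaleR_left.sum) (simp add: s1)
  have "(\<Sum>p\<in>F. mu p * inner y (y - fst p)) = inner y (\<Sum>p\<in>F. mu p *\<^sub>R (y - fst p))"
    by (simp add: inner_sum_right)
  also have "(\<Sum>p\<in>F. mu p *\<^sub>R (y - fst p)) = 0"
    by (simp add: scaleR_diff_right sum_subtractf s1 flip: scaleR_left.sum y)
  finally have z: "(\<Sum>p\<in>F. mu p * inner y (y - fst p)) = 0" by simp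
  define S where "S = (\<Sum>p\<in>F. \<Sum>q\<in>F. mu p * mu q * inner (x - snd p) (fst q - fst p))"
  have S1: "(\<Sum>p\<in>F. mu p * inner (x - snd p) (y - fst p)) = S"
    unfolding S_def e1 by (simp add: inner_sum_right sum_distrib_left mult.assoc)
  have sw: "S = (\<Sum>p\<in>F. \<Sum>q\<in>F. mu q * mu p * inner (x - snd q) (fst p - fst q))"
    unfolding S_def by (rule sum.swap)
  have "2 * S = (\<Sum>p\<in>F. \<Sum>q\<in>F. mu p * mu q * (inner (x - snd p) (fst q - fst p) + inner (x - snd q) (fst p - fst q)))"
    by (subst mult_2, subst (2) sw, unfold S_def) (simp add: sum.distrib[symmetric] algebra_simps)
  also have "\<dots> = (\<Sum>p\<in>F. \<Sum>q\<in>F. mu p * mu q * inner (fst p - fst q) (snd p - snd q))"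
    by (intro sum.cong refl) (simp add: algebra_simps inner_diff_left inner_diff_right inner_commute)
  also have "\<dots> \<ge> 0"
    by (intro sum_nonneg mult_nonneg_nonneg nn mon) auto
  finally have "S \<ge> 0" by simp
  have "(\<Sum>p\<in>F. mu p * inner (x - y - snd p) (y - fst p)) =
        (\<Sum>p\<in>F. mu p * inner (x - snd p) (y - fst p)) - (\<Sum>p\<in>F. mu p * inner y (y - fst p))"
    by (simp add: sum_subtractf[symmetric] inner_diff_left algebra_simps)
  then show ?thesis using z S1 \<open>S \<ge> 0\<close> by simp
qed



lemma fip:
  fixes F :: "('a::euclidean_space \<times> 'a) set"
  assumes fin: "finite F"
    and mon: "\<And>p q. p \<in> F \<Longrightarrow> q \<in> F \<Longrightarrow> inner (fst p - fst q) (snd p - snd q) \<ge> 0"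
  shows "\<exists>y. \<forall>p\<in>F. inner (x - y - snd p) (y - fst p) \<ge> 0"
proof (cases "F = {}")
  case True then show ?thesis by auto
next
  case False
  define g where "g p y = max 0 (- inner (x - y - snd p) (y - fst p))" for p y
  define G where "G y = (\<Sum>p\<in>F. g p y)" for y
  define T where "T y = inverse (1 + G y) *\<^sub>R (y + (\<Sum>p\<in>F. g p y *\<^sub>R fst p))" for y
  define K where "K = convex hull (fst ` F)"
  have g0: "g p y \<ge> 0" for p y by (simp add: g_def)
  have G0: "G y \<ge> 0" for y unfolding G_def by (simp add: sum_nonneg g0)
  have Kc: "compact K" "convex K" "K \<noteq> {}"
    using fin False by (auto simp: K_def compact_convex_hull finite_imp_compact)
  have cg: "continuous_on K (g p)" for p unfolding g_def by (intro continuous_intros)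
  have cT: "continuous_on K T" unfolding T_def G_def
    using G0[unfolded G_def] by (intro continuous_intros cg) (smt (verit))+
  have TK: "T \<in> K \<rightarrow> K"
  proof
    fix y assume yK: "y \<in> K"
    show "T y \<in> K"
    proof (cases "G y = 0")
      case True
      then have "\<forall>p\<in>F. g p y = 0" using fin g0 unfolding G_def by (simp add: sum_nonneg_eq_0_iff)
      then show ?thesis using True yK by (simp add: T_def)
    next
      case False
      then have Gp: "G y > 0" using G0 by (simp add: order_less_le)
      define z where "z = (\<Sum>p\<in>F. (g p y / G y) *\<^sub>R fst p)"
      have "z \<in> K" unfolding z_def
        by (rule convex_sum[OF fin Kc(2)]) (use Gp in \<open>auto simp: K_def hull_inc g0 G_def sum_divide_distrib[symmetric] intro!: divide_nonneg_pos\<close>)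
      have sz: "(\<Sum>p\<in>F. g p y *\<^sub>R fst p) = G y *\<^sub>R z"
        unfolding z_def using Gp by (simp add: scaleR_sum_right)
      have "T y = (1 - G y / (1 + G y)) *\<^sub>R y + (G y / (1 + G y)) *\<^sub>R z"
        unfolding T_def sz using G0[of y]
        by (simp add: field_simps scaleR_add_right)
      also have "\<dots> \<in> K"
        using convexD_alt[OF Kc(2) yK \<open>z \<in> K\<close>, of "G y / (1 + G y)"] G0[of y] by auto
      finally show ?thesis .
    qed
  qed
  obtain y where yK: "y \<in> K" and fy: "T y = y"
    using brouwer[OF Kc cT TK] by blast
  have Gz: "G y = 0"
  proof (rule ccontr)
    assume "G y \<noteq> 0"
    then have Gp: "G y > 0" using G0 by (simp add: order_less_le)
    have "(1 + G y) *\<^sub>R y = y + (\<Sum>p\<in>F. g p y *\<^sub>R fst p)"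
      using fy G0[of y] unfolding T_def
      by (metis add_pos_nonneg divideR_right zero_less_one order_less_irrefl scaleR_one scaleR_scaleR inverse_eq_divide)
    then have ye: "y = (\<Sum>p\<in>F. (g p y / G y) *\<^sub>R fst p)"
      using Gp by (simp add: scaleR_add_left scaleR_sum_right[symmetric] divide_inverse_commute flip: scaleR_scaleR)
        (metis less_irrefl scaleR_scaleR inverse_eq_divide left_inverse scaleR_one)
    have "(\<Sum>p\<in>F. (g p y / G y) * inner (x - y - snd p) (y - fst p)) \<ge> 0"
      by (rule key_ineq[OF fin mon _ _ ye]) (use Gp in \<open>auto simp: g0 G_def sum_divide_distrib[symmetric] intro!: divide_nonneg_pos\<close>)
    moreover have "g p y * inner (x - y - snd p) (y - fst p) = - (g p y * g p y)" for p
      by (simp add: g_def max_def power2_eq_square)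
    moreover have "(\<Sum>p\<in>F. g p y * g p y) > 0"
    proof -
      obtain p where "p \<in> F" "g p y > 0"
        using Gp fin unfolding G_def by (metis g0 order_less_le sum_nonneg_eq_0_iff)
      then show ?thesis using fin by (intro sum_pos2[of F p]) auto
    qed
    ultimately show False using Gp
      by (simp add: sum_negf sum_divide_distrib[symmetric] zero_le_divide_iff)
        (meson divide_pos_pos linorder_not_le)
  qed
  then have "\<forall>p\<in>F. g p y = 0" using fin g0 unfolding G_def by (simp add: sum_nonneg_eq_0_iff)
  then have "\<forall>p\<in>F. inner (x - y - snd p) (y - fst p) \<ge> 0" by (auto simp: g_def max_def split: if_splits; force)
  then show ?thesis by blast
qed



lemma minty:
  fixes A :: "'a::euclidean_space \<Rightarrow> 'a set"
  assumes mm: "maximal_monotone A" and z: "u0 \<in> A x0"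
  shows "\<exists>y. x - y \<in> A y"
proof -
  have mon: "monotone_op A" using mm by (simp add: maximal_monotone_def)
  define K where "K p = {y. inner (x - y - snd p) (y - fst p) \<ge> 0}" for p :: "'a \<times> 'a"
  have clK: "closed (K p)" for p
    unfolding K_def by (intro closed_Collect_le continuous_intros)
  have bK: "bounded (K p)" for p
  proof -
    have "norm (y - fst p) \<le> norm (x - snd p - fst p)" if "y \<in> K p" for y
    proof -
      have "inner (y - fst p) (y - fst p) \<le> inner (x - snd p - fst p) (y - fst p)"
        using that unfolding K_def by (simp add: algebra_simps inner_diff_left inner_diff_right inner_commute)
      also have "\<dots> \<le> norm (x - snd p - fst p) * norm (y - fst p)" by (rule norm_cauchy_schwarz)
      finally have "norm (y - fst p) ^ 2 \<le> norm (x - snd p - fst p) * norm (y - fst p)"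
        by (simp add: power2_norm_eq_inner)
      then show ?thesis
        by (metis mult_right_le_imp_le norm_ge_zero power2_eq_square order_le_less)
    qed
    then show ?thesis unfolding bounded_iff
      by (metis (no_types, lifting) bounded_iff bounded_cball mem_cball dist_norm norm_minus_commute)
  qed
  have "K (x0, u0) \<inter> (\<Inter>p\<in>graph_op A. K p) \<noteq> {}"
  proof (rule compact_imp_fip_image)
    show "compact (K (x0, u0))" using clK bK by (simp add: compact_eq_bounded_closed)
    show "closed (K p)" for p by (rule clK)
    fix I' assume "finite I'" "I' \<subseteq> graph_op A"
    then have fin: "finite (insert (x0,u0) I')" and sub: "insert (x0,u0) I' \<subseteq> graph_op A"
      using z by (auto simp: graph_op_def)
    have "\<exists>y. \<forall>p\<in>insert (x0,u0) I'. inner (x - y - snd p) (y - fst p) \<ge> 0"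
      by (rule fip[OF fin]) (use sub mon in \<open>auto simp: graph_op_def monotone_op_def subset_iff; blast\<close>)
    then show "K (x0, u0) \<inter> (\<Inter>p\<in>I'. K p) \<noteq> {}" unfolding K_def by blast
  qed
  then obtain y where y: "\<And>a b. b \<in> A a \<Longrightarrow> inner (x - y - b) (y - a) \<ge> 0"
    unfolding K_def graph_op_def by fastforce
  define B where "B z = A z \<union> (if z = y then {x - y} else {})" for z
  have "monotone_op B"
    unfolding monotone_op_def B_def
  proof (intro allI impI)
    fix a c u v assume "u \<in> A a \<union> (if a = y then {x - y} else {})" "v \<in> A c \<union> (if c = y then {x - y} else {})"
    then consider "u \<in> A a" "v \<in> A c" | "u \<in> A a" "c = y" "v = x - y" | "a = y" "u = x - y" "v \<in> A c"
      | "a = y" "u = x - y" "c = y" "v = x - y" by (auto split: if_splits)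
    then show "inner (a - c) (u - v) \<ge> 0"
    proof cases
      case 1 then show ?thesis using mon unfolding monotone_op_def by blast
    next
      case 2
      have "inner (x - y - u) (y - a) \<ge> 0" using y[OF 2(1)] .
      then show ?thesis unfolding 2(2,3)
        by (simp add: inner_commute inner_diff_left inner_diff_right algebra_simps)
    next
      case 3
      have "inner (x - y - v) (y - c) \<ge> 0" using y[OF 3(3)] .
      then show ?thesis unfolding 3(1,2)
        by (simp add: inner_commute inner_diff_left inner_diff_right algebra_simps)
    next
      case 4 then show ?thesis by simp
    qed
  qed
  moreover have "graph_op A \<subseteq> graph_op B" by (auto simp: graph_op_def B_def)
  ultimately have "graph_op B = graph_op A" using mm by (simp add: maximal_monotone_def)
  then have "(y, x - y) \<in> graph_op A" by (auto simp: graph_op_def B_def)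
  then show ?thesis by (auto simp: graph_op_def)
qed

lemma resolvent_uniq:
  assumes "monotone_op A" "x - y1 \<in> A y1" "x - y2 \<in> A y2"
  shows "y1 = y2"
proof -
  have "inner (y1 - y2) ((x - y1) - (x - y2)) \<ge> 0" using assms unfolding monotone_op_def by blast
  then have "inner (y1 - y2) (y1 - y2) \<le> 0" by (simp add: inner_diff_right inner_diff_left inner_commute)
  then show ?thesis by (metis eq_iff_diff_eq_0 inner_gt_zero_iff not_le)
qed

lemma resolvent_in:
  fixes A :: "'a::euclidean_space \<Rightarrow> 'a set"
  assumes mm: "maximal_monotone A" and z: "u0 \<in> A x0"
  shows "x - resolvent A x \<in> A (resolvent A x)"
proof -
  have mon: "monotone_op A" using mm by (simp add: maximal_monotone_def)
  have "\<exists>!y. x - y \<in> A y" using minty[OF mm z] resolvent_uniq[OF mon] by blast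
  then show ?thesis unfolding resolvent_def by (rule theI')
qed

lemma yosida_firm:
  fixes A :: "'a::euclidean_space \<Rightarrow> 'a set"
  assumes mm: "maximal_monotone A" and z: "u0 \<in> A x0"
  shows "inner (x - y) (yosida A x - yosida A y) \<ge> (norm (yosida A x - yosida A y))^2"
proof -
  have mon: "monotone_op A" using mm by (simp add: maximal_monotone_def)
  have "inner (resolvent A x - resolvent A y) (yosida A x - yosida A y) \<ge> 0"
    using mon resolvent_in[OF mm z, of x] resolvent_in[OF mm z, of y]
    unfolding monotone_op_def yosida_def by blast
  moreover have "resolvent A x - resolvent A y = (x - y) - (yosida A x - yosida A y)"
    by (simp add: yosida_def)
  ultimately show ?thesis by (simp add: inner_diff_left power2_norm_eq_inner)
qed

lemma yosida_zero:
  assumes mm: "maximal_monotone A" and z: "0 \<in> A xs"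
  shows "yosida A xs = 0"
proof -
  have mon: "monotone_op A" using mm by (simp add: maximal_monotone_def)
  have "resolvent A xs = xs" unfolding resolvent_def
    by (rule the_equality) (use z resolvent_uniq[OF mon, of xs xs] in auto)
  then show ?thesis by (simp add: yosida_def)
qed

lemma deriv_mono:
  fixes F :: "'a::real_inner \<Rightarrow> 'a"
  assumes mon: "\<And>x y. inner (x - y) (F x - F y) \<ge> 0"
    and d: "(F has_derivative D) (at x)"
  shows "inner (D w) w \<ge> 0"
proof (rule ccontr)
  assume neg: "\<not> ?thesis"
  then have w0: "w \<noteq> 0" using has_derivative_bounded_linear[OF d] by (auto simp: linear_simps)
  define del where "del = - inner (D w) w"
  have dp: "del > 0" using neg by (simp add: del_def)
  have lin: "linear D" using has_derivative_linear[OF d] .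
  define e where "e = del / (2 * (norm w)^2)"
  have ep: "e > 0" using dp w0 by (simp add: e_def)
  obtain r where r: "r > 0" and rr: "\<And>y. norm (y - x) < r \<Longrightarrow> norm (F y - F x - D (y - x)) \<le> e * norm (y - x)"
    using d ep unfolding has_derivative_within_alt by blast
  define s where "s = r / (2 * norm w)"
  have sp: "s > 0" using r w0 by (simp add: s_def)
  have "norm (s *\<^sub>R w) < r" using r w0 by (simp add: s_def)
  then have err: "norm (F (x + s *\<^sub>R w) - F x - D (s *\<^sub>R w)) \<le> e * norm (s *\<^sub>R w)"
    using rr[of "x + s *\<^sub>R w"] by simp
  have "0 \<le> inner ((x + s *\<^sub>R w) - x) (F (x + s *\<^sub>R w) - F x)" by (rule mon)
  also have "\<dots> = inner (s *\<^sub>R w) (D (s *\<^sub>R w)) + inner (s *\<^sub>R w) (F (x + s *\<^sub>R w) - F x - D (s *\<^sub>R w))"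
    by (simp add: inner_diff_right)
  also have "\<dots> \<le> inner (s *\<^sub>R w) (D (s *\<^sub>R w)) + norm (s *\<^sub>R w) * (e * norm (s *\<^sub>R w))"
    using norm_cauchy_schwarz[of "s *\<^sub>R w" "F (x + s *\<^sub>R w) - F x - D (s *\<^sub>R w)"] err
      mult_left_mono[OF err norm_ge_zero[of "s *\<^sub>R w"]] by linarith
  also have "\<dots> = s * s * (- del + e * (norm w)^2)"
    using sp by (simp add: linear_cmul[OF lin] del_def inner_commute algebra_simps power2_eq_square)
  also have "\<dots> = s * s * (- del / 2)" using w0 by (simp add: e_def)
  also have "\<dots> < 0" using sp dp by (simp add: mult_pos_neg)
  finally show False by simp
qed



theorem theorem3:
  fixes A :: "'a::euclidean_space \<Rightarrow> 'a set"
    and xstar x0 :: 'a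
    and X :: "real \<Rightarrow> 'a"
  assumes maxmono: "maximal_monotone A"
    and zero: "0 \<in> A xstar"
    and diff: "\<And>x. yosida A differentiable (at x)"
    and ode: "\<And>t. t \<ge> 0 \<Longrightarrow>
               (X has_vector_derivative (resolvent A (X t) - X t)) (at t within {0..})"
    and init: "X 0 = x0"
  shows "\<forall>t>0. norm (vector_derivative X (at t)) ^ 2 = norm (yosida A (X t)) ^ 2
            \<and> norm (yosida A (X t)) ^ 2 \<le> norm (x0 - xstar) ^ 2 / (2 * t)"
proof -
  define F where "F = yosida A"
  have firm: "inner (x - y) (F x - F y) \<ge> (norm (F x - F y))^2" for x y
    unfolding F_def by (rule yosida_firm[OF maxmono zero])
  have Fmon: "inner (x - y) (F x - F y) \<ge> 0" for x y
    using firm[of x y] by (meson order_trans zero_le_power2)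
  have Fxs: "F xstar = 0" unfolding F_def by (rule yosida_zero[OF maxmono zero])
  have eqF: "resolvent A x - x = - F x" for x by (simp add: F_def yosida_def)
  have odeF: "(X has_vector_derivative (- F (X t))) (at t within {0..})" if "t \<ge> 0" for t
    using ode[OF that] unfolding eqF .
  have odeA: "(X has_vector_derivative (- F (X t))) (at t)" if "t > 0" for t
  proof -
    have "(X has_vector_derivative (- F (X t))) (at t within {0<..})"
      by (rule has_vector_derivative_within_subset[OF odeF]) (use that in auto)
    moreover have "at t within {0<..} = at t" using that by (intro at_within_open) auto
    ultimately show ?thesis by simp
  qed
  have contX: "continuous_on {0..} X"
    using odeF by (auto simp: continuous_on_eq_continuous_within intro: has_vector_derivative_continuous)
  have contF: "continuous_on UNIV F"
    using diff unfolding F_def by (simp add: continuous_on_eq_continuous_within differentiable_imp_continuous_within)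
  define E where "E t = t * inner (F (X t)) (F (X t)) + (1/2) * inner (X t - xstar) (X t - xstar)" for t
  have dE: "\<exists>y. (E has_real_derivative y) (at t) \<and> y \<le> 0" if tp: "t > 0" for t
  proof -
    obtain D where D: "(F has_derivative D) (at (X t))"
      using diff[of "X t"] unfolding F_def differentiable_def by blast
    have lin: "linear D" using has_derivative_linear[OF D] .
    define v where "v = - F (X t)"
    have dX: "(X has_derivative (\<lambda>h. h *\<^sub>R v)) (at t)"
      using odeA[OF tp] by (simp add: v_def has_vector_derivative_def)
    have dFX: "((\<lambda>s. F (X s)) has_derivative (\<lambda>h. D (h *\<^sub>R v))) (at t)"
      using diff_chain_at[OF dX D] by (simp add: o_def)
    define E' where "E' = inner (F (X t)) (F (X t)) + 2 * t * inner (D v) (F (X t)) + inner v (X t - xstar)"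
    have hI: "((\<lambda>s. inner (F (X s)) (F (X s))) has_derivative (\<lambda>h. inner (F (X t)) (D (h *\<^sub>R v)) + inner (D (h *\<^sub>R v)) (F (X t)))) (at t)"
      by (rule has_derivative_inner[OF dFX dFX])
    have hM: "((\<lambda>s. s * inner (F (X s)) (F (X s))) has_derivative (\<lambda>h. t * (inner (F (X t)) (D (h *\<^sub>R v)) + inner (D (h *\<^sub>R v)) (F (X t))) + h * inner (F (X t)) (F (X t)))) (at t)"
      by (rule has_derivative_mult[OF has_derivative_ident hI])
    have dXs: "((\<lambda>s. X s - xstar) has_derivative (\<lambda>h. h *\<^sub>R v - 0)) (at t)"
      by (rule has_derivative_diff[OF dX has_derivative_const])
    have hJ: "((\<lambda>s. (1/2) * inner (X s - xstar) (X s - xstar)) has_derivative (\<lambda>h. (1/2) * (inner (X t - xstar) (h *\<^sub>R v - 0) + inner (h *\<^sub>R v - 0) (X t - xstar)) + 0 * inner (X t - xstar) (X t - xstar))) (at t)"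
      by (rule has_derivative_mult[OF has_derivative_const has_derivative_inner[OF dXs dXs]])
    have hE: "(E has_derivative (\<lambda>h. (t * (inner (F (X t)) (D (h *\<^sub>R v)) + inner (D (h *\<^sub>R v)) (F (X t))) + h * inner (F (X t)) (F (X t))) + ((1/2) * (inner (X t - xstar) (h *\<^sub>R v - 0) + inner (h *\<^sub>R v - 0) (X t - xstar)) + 0 * inner (X t - xstar) (X t - xstar)))) (at t)"
      unfolding E_def by (rule has_derivative_add[OF hM hJ])
    moreover have "(\<lambda>h. (t * (inner (F (X t)) (D (h *\<^sub>R v)) + inner (D (h *\<^sub>R v)) (F (X t))) + h * inner (F (X t)) (F (X t))) + ((1/2) * (inner (X t - xstar) (h *\<^sub>R v - 0) + inner (h *\<^sub>R v - 0) (X t - xstar)) + 0 * inner (X t - xstar) (X t - xstar))) = (\<lambda>h. h * E')"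
      by (rule ext) (simp add: E'_def linear_cmul[OF lin] inner_commute algebra_simps)
    ultimately have hE2: "(E has_derivative (\<lambda>h. h * E')) (at t)" by simp
    have "(E has_real_derivative E') (at t)" unfolding has_field_derivative_def
      by (rule has_derivative_eq_rhs[OF hE2]) (simp add: fun_eq_iff)
    moreover have "E' \<le> 0"
    proof -
      have "inner (D (F (X t))) (F (X t)) \<ge> 0" by (rule deriv_mono[OF Fmon D])
      then have a: "t * inner (D v) (F (X t)) \<le> 0"
        using tp by (simp add: v_def linear_neg[OF lin] mult_nonneg_nonneg)
      have "inner (X t - xstar) (F (X t) - F xstar) \<ge> (norm (F (X t) - F xstar))^2" by (rule firm)
      then have b: "inner v (X t - xstar) \<le> - inner (F (X t)) (F (X t))"
        by (simp add: v_def Fxs power2_norm_eq_inner inner_commute)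
      show ?thesis using a b unfolding E'_def by linarith
    qed
    ultimately show ?thesis by blast
  qed
  show ?thesis
  proof (intro allI impI conjI)
    fix t :: real assume tp: "t > 0"
    have "vector_derivative X (at t) = - F (X t)" by (rule vector_derivative_at[OF odeA[OF tp]])
    then show "norm (vector_derivative X (at t)) ^ 2 = norm (yosida A (X t)) ^ 2" by (simp add: F_def)
    have cE: "continuous_on {0..t} E"
    proof -
      have cX: "continuous_on {0..t} X" using contX by (rule continuous_on_subset) auto
      have cFX: "continuous_on {0..t} (\<lambda>s. F (X s))"
        using continuous_on_compose[OF cX continuous_on_subset[OF contF]] by (simp add: o_def)
      show ?thesis unfolding E_def by (intro continuous_intros cX cFX)
    qed
    have "E t \<le> E 0"
      using DERIV_nonpos_imp_decreasing_open[of 0 t E] tp dE cE by auto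
    then have "t * (norm (F (X t)))^2 \<le> (norm (x0 - xstar))^2 / 2"
      unfolding E_def using init by (simp add: power2_norm_eq_inner) (use inner_ge_zero[of "X t - xstar"] in linarith)
    then show "norm (yosida A (X t)) ^ 2 \<le> norm (x0 - xstar) ^ 2 / (2 * t)"
      using tp by (simp add: F_def field_simps)
  qed
qed

end
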